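(* Let $\xi>0$ be such that $D_\xi=D^TD-\xi^2I$ is nonsingular. Then for every $\omega\ge0$, the matrix $G(j\omega)$ has a singular value equal to $\xi$ if and only if $\lambda=j\omega$ solves $\det H_\xi(\lambda)=0$, where $H_\xi(\lambda)=\lambda I-M_0-\sum_{i=1}^m\left(M_ie^{-\lambda\tau_i}+M_{-i}e^{\lambda\tau_i}\right)$.
   Context: Let $n,m,n_u,n_y$ be positive integers, $A_0,\dots,A_m\in\mathbb{R}^{n\times n}$, $B\in\mathbb{R}^{n\times n_u}$, $C\in\mathbb{R}^{n_y\times n}$, $D\in\mathbb{R}^{n_y\times n_u}$, delays $\tau_1,\dots,\tau_m\ge0$. The transfer function is $G(s)=C\left(sI-A_0-\sum_{i=1}^mA_ie^{-\tau_is}\right)^{-1}B+D$. Standing assumption: the system is stable, i.e. all solutions $s$ of $\det\left(sI-A_0-\sum_{i=1}^mA_ie^{-\tau_is}\right)=0$ have negative real part. For $\xi>0$ put $D_\xi=D^TD-\xi^2I_{n_u}$, $\tilde D_\xi=DD^T-\xi^2I_{n_y}$, and define $2n\times2n$ matrices $M_0=\begin{bmatrix} A_0-BD_\xi^{-1}D^TC & -BD_\xi^{-1}B^T\\ \xi^2 C^T\tilde D_\xi^{-1}C & -A_0^T+C^TDD_\xi^{-1}B^T\end{bmatrix}$, $M_i=\begin{bmatrix}A_i&0\\0&0\end{bmatrix}$, $M_{-i}=\begin{bmatrix}0&0\\0&-A_i^T\end{bmatrix}$, $1\le i\le m$. *)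

theory Defs
  imports "HOL-Analysis.Analysis"
begin

definition cmat :: "real^'c^'r \<Rightarrow> complex^'c^'r" where
  "cmat A = (\<chi> i j. complex_of_real (A $ i $ j))"

definition adjoint_mat :: "complex^'c^'r \<Rightarrow> complex^'r^'c" where
  "adjoint_mat G = (\<chi> i j. cnj (G $ j $ i))"

definition smat :: "complex \<Rightarrow> complex^'c^'r \<Rightarrow> complex^'c^'r" where
  "smat c M = (\<chi> i j. c * M $ i $ j)"

definition is_eigenvalue :: "complex^'n^'n \<Rightarrow> complex \<Rightarrow> bool" where
  "is_eigenvalue M c \<longleftrightarrow> (\<exists>v. v \<noteq> 0 \<and> M *v v = c *s v)"

definition is_singular_value :: "complex^'c^'r \<Rightarrow> real \<Rightarrow> bool" where
  "is_singular_value G \<sigma> \<longleftrightarrow> \<sigma> \<ge> 0 \<and> is_eigenvalue (adjoint_mat G ** G) (complex_of_real (\<sigma>\<^sup>2))"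

definition char_mat :: "nat \<Rightarrow> (nat \<Rightarrow> real^'n^'n) \<Rightarrow> (nat \<Rightarrow> real) \<Rightarrow> complex \<Rightarrow> complex^'n^'n" where
  "char_mat m A \<tau> s = mat s - cmat (A 0)
     - (\<Sum>i\<in>{1..m}. smat (exp (- complex_of_real (\<tau> i) * s)) (cmat (A i)))"

definition transfer :: "nat \<Rightarrow> (nat \<Rightarrow> real^'n^'n) \<Rightarrow> (nat \<Rightarrow> real) \<Rightarrow> real^'u^'n \<Rightarrow> real^'n^'y
    \<Rightarrow> real^'u^'y \<Rightarrow> complex \<Rightarrow> complex^'u^'y" where
  "transfer m A \<tau> B C D s = cmat C ** matrix_inv (char_mat m A \<tau> s) ** cmat B + cmat D"

definition block2 :: "real^'n^'n \<Rightarrow> real^'n^'n \<Rightarrow> real^'n^'n \<Rightarrow> real^'n^'n \<Rightarrow> real^('n+'n)^('n+'n)" where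
  "block2 P Q R S = (\<chi> i j. case (i, j) of
       (Inl a, Inl b) \<Rightarrow> P $ a $ b | (Inl a, Inr b) \<Rightarrow> Q $ a $ b
     | (Inr a, Inl b) \<Rightarrow> R $ a $ b | (Inr a, Inr b) \<Rightarrow> S $ a $ b)"

definition D_xi :: "real^'u^'y \<Rightarrow> real \<Rightarrow> real^'u^'u" where
  "D_xi D \<xi> = transpose D ** D - (\<xi>\<^sup>2) *\<^sub>R mat 1"

definition Dt_xi :: "real^'u^'y \<Rightarrow> real \<Rightarrow> real^'y^'y" where
  "Dt_xi D \<xi> = D ** transpose D - (\<xi>\<^sup>2) *\<^sub>R mat 1"

definition M0 :: "real^'n^'n \<Rightarrow> real^'u^'n \<Rightarrow> real^'n^'y \<Rightarrow> real^'u^'y \<Rightarrow> real \<Rightarrow> real^('n+'n)^('n+'n)" where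
  "M0 A0 B C D \<xi> = block2
     (A0 - B ** matrix_inv (D_xi D \<xi>) ** transpose D ** C)
     (- (B ** matrix_inv (D_xi D \<xi>) ** transpose B))
     ((\<xi>\<^sup>2) *\<^sub>R (transpose C ** matrix_inv (Dt_xi D \<xi>) ** C))
     (- transpose A0 + transpose C ** D ** matrix_inv (D_xi D \<xi>) ** transpose B)"

definition Mplus :: "real^'n^'n \<Rightarrow> real^('n+'n)^('n+'n)" where
  "Mplus Ai = block2 Ai 0 0 0"

definition Mminus :: "real^'n^'n \<Rightarrow> real^('n+'n)^('n+'n)" where
  "Mminus Ai = block2 0 0 0 (- transpose Ai)"

definition H_xi :: "nat \<Rightarrow> (nat \<Rightarrow> real^'n^'n) \<Rightarrow> (nat \<Rightarrow> real) \<Rightarrow> real^'u^'n \<Rightarrow> real^'n^'y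
    \<Rightarrow> real^'u^'y \<Rightarrow> real \<Rightarrow> complex \<Rightarrow> complex^('n+'n)^('n+'n)" where
  "H_xi m A \<tau> B C D \<xi> z = mat z - cmat (M0 (A 0) B C D \<xi>)
     - (\<Sum>i\<in>{1..m}. smat (exp (- z * complex_of_real (\<tau> i))) (cmat (Mplus (A i)))
                    + smat (exp (z * complex_of_real (\<tau> i))) (cmat (Mminus (A i))))"

end

theory Submission
  imports Defs
begin


lemma minv: fixes X :: "'a::semiring_1^'n^'n" assumes "invertible X"
  shows "X ** matrix_inv X = mat 1" "matrix_inv X ** X = mat 1"
  using someI_ex[OF assms[unfolded invertible_def]] unfolding matrix_inv_def by auto

lemma cmat_mul: "cmat (X ** Y) = cmat X ** cmat Y"
  by (simp add: cmat_def matrix_matrix_mult_def vec_eq_iff)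
lemma cmat_add: "cmat (X + Y) = cmat X + cmat Y"
  by (simp add: cmat_def vec_eq_iff)
lemma cmat_diff: "cmat (X - Y) = cmat X - cmat Y"
  by (simp add: cmat_def vec_eq_iff)
lemma cmat_uminus: "cmat (- X) = - cmat X"
  by (simp add: cmat_def vec_eq_iff)
lemma cmat_scaleR: "cmat (c *\<^sub>R X) = c *\<^sub>R cmat X"
  by (simp add: cmat_def vec_eq_iff complex_eq_iff)
lemma cmat_mat1: "cmat (mat 1) = mat 1"
  by (simp add: cmat_def vec_eq_iff mat_def)
lemma cmat_transpose: "cmat (transpose X) = transpose (cmat X)"
  by (simp add: cmat_def vec_eq_iff transpose_def)
lemma adj_cmat: "adjoint_mat (cmat X) = transpose (cmat X)"
  by (simp add: cmat_def vec_eq_iff transpose_def adjoint_mat_def)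
lemma adj_mul: "adjoint_mat (X ** Y) = adjoint_mat Y ** adjoint_mat X"
  by (simp add: adjoint_mat_def matrix_matrix_mult_def vec_eq_iff mult.commute)
lemma adj_add: "adjoint_mat (X + Y) = adjoint_mat X + adjoint_mat Y"
  by (simp add: adjoint_mat_def vec_eq_iff)
lemma adj_mat1: "adjoint_mat (mat 1) = mat 1"
  by (simp add: adjoint_mat_def vec_eq_iff mat_def)

lemma smat_mv: "smat c X *v v = c *s (X *v v)"
  by (simp add: smat_def matrix_vector_mult_def vec_eq_iff sum_distrib_left mult.assoc)

definition vl :: "'a^('n::finite+'n) \<Rightarrow> 'a^'n" where "vl z = (\<chi> a. z $ Inl a)"
definition vr :: "'a^('n::finite+'n) \<Rightarrow> 'a^'n" where "vr z = (\<chi> a. z $ Inr a)"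
definition vj :: "'a^'n \<Rightarrow> 'a^'n \<Rightarrow> 'a^('n::finite+'n)" where
  "vj x p = (\<chi> i. case i of Inl a \<Rightarrow> x $ a | Inr a \<Rightarrow> p $ a)"
definition cblock :: "complex^'n^'n \<Rightarrow> complex^'n^'n \<Rightarrow> complex^'n^'n \<Rightarrow> complex^'n^'n \<Rightarrow> complex^('n::finite+'n)^('n+'n)" where
  "cblock P Q R S = (\<chi> i j. case (i, j) of
       (Inl a, Inl b) \<Rightarrow> P $ a $ b | (Inl a, Inr b) \<Rightarrow> Q $ a $ b
     | (Inr a, Inl b) \<Rightarrow> R $ a $ b | (Inr a, Inr b) \<Rightarrow> S $ a $ b)"

lemma sum_plus_univ: "(\<Sum>i\<in>(UNIV::('n::finite+'n) set). f i) = (\<Sum>a\<in>UNIV. f (Inl a)) + (\<Sum>a\<in>UNIV. f (Inr a))"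
  by (subst UNIV_Plus_UNIV[symmetric], subst sum.Plus) auto

lemma cblock_mv: "cblock P Q R S *v z = vj (P *v vl z + Q *v vr z) (R *v vl z + S *v vr z)"
  by (simp add: vec_eq_iff cblock_def vj_def vl_def vr_def matrix_vector_mult_def sum_plus_univ split: sum.split)

lemma vj_eq0: "vj x p = 0 \<longleftrightarrow> x = 0 \<and> p = 0"
  by (auto simp: vec_eq_iff vj_def split: sum.split)

lemma vlr: "z = vj (vl z) (vr z)"
  by (simp add: vec_eq_iff vj_def vl_def vr_def split: sum.split)

lemma cblock_add: "cblock P Q R S + cblock P' Q' R' S' = cblock (P+P') (Q+Q') (R+R') (S+S')"
  by (simp add: cblock_def vec_eq_iff split: sum.split)
lemma cblock_diff: "cblock P Q R S - cblock P' Q' R' S' = cblock (P-P') (Q-Q') (R-R') (S-S')"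
  by (simp add: cblock_def vec_eq_iff split: sum.split)
lemma cblock_smat: "smat c (cblock P Q R S) = cblock (smat c P) (smat c Q) (smat c R) (smat c S)"
  by (simp add: cblock_def smat_def vec_eq_iff split: sum.split)
lemma cblock_zero: "(0::complex^('n::finite+'n)^('n+'n)) = cblock 0 0 0 0"
  by (simp add: cblock_def vec_eq_iff split: sum.split)
lemma cblock_sum: "finite I \<Longrightarrow> (\<Sum>i\<in>I. cblock (P i) (Q i) (R i) (S i)) = cblock (\<Sum>i\<in>I. P i) (\<Sum>i\<in>I. Q i) (\<Sum>i\<in>I. R i) (\<Sum>i\<in>I. S i)"
  by (induction I rule: finite_induct) (simp_all add: cblock_add cblock_zero[symmetric])
lemma cblock_mat: "(mat z :: complex^('n::finite+'n)^('n+'n)) = cblock (mat z) 0 0 (mat z)"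
  by (simp add: cblock_def mat_def vec_eq_iff split: sum.split)
lemma cmat_block2: "cmat (block2 P Q R S) = cblock (cmat P) (cmat Q) (cmat R) (cmat S)"
  by (simp add: cblock_def block2_def cmat_def vec_eq_iff split: sum.split)
lemma cmat_zero: "cmat 0 = 0"
  by (simp add: cmat_def vec_eq_iff)
lemma smat_zero: "smat c 0 = 0"
  by (simp add: smat_def vec_eq_iff)
lemma adj_diff: "adjoint_mat (X - Y) = adjoint_mat X - adjoint_mat Y"
  by (simp add: adjoint_mat_def vec_eq_iff)
lemma adj_mat: "adjoint_mat (mat z) = mat (cnj z)"
  by (simp add: adjoint_mat_def vec_eq_iff mat_def)
lemma adj_smat: "adjoint_mat (smat c X) = smat (cnj c) (adjoint_mat X)"
  by (simp add: adjoint_mat_def vec_eq_iff smat_def)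
lemma adj_sum: "finite I \<Longrightarrow> adjoint_mat (\<Sum>i\<in>I. X i) = (\<Sum>i\<in>I. adjoint_mat (X i))"
  by (simp add: adjoint_mat_def vec_eq_iff)

lemma smat_uminus: "smat c (- X) = - smat c X"
  by (simp add: smat_def vec_eq_iff)

lemma mat_uminus: "(mat (- z) :: 'a::ring_1^'n^'n) = - mat z"
  by (simp add: mat_def vec_eq_iff)

lemma H_block:
  assumes "cnj s = - s"
  shows "H_xi m A \<tau> B C D \<xi> s = cblock
     (char_mat m A \<tau> s + cmat B ** cmat (matrix_inv (D_xi D \<xi>)) ** transpose (cmat D) ** cmat C)
     (cmat B ** cmat (matrix_inv (D_xi D \<xi>)) ** transpose (cmat B))
     (- (\<xi>\<^sup>2 *\<^sub>R (transpose (cmat C) ** cmat (matrix_inv (Dt_xi D \<xi>)) ** cmat C)))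
     (- adjoint_mat (char_mat m A \<tau> s) - transpose (cmat C) ** cmat D ** cmat (matrix_inv (D_xi D \<xi>)) ** transpose (cmat B))"
proof -
  have e: "cnj (exp (- complex_of_real (\<tau> i) * s)) = exp (s * complex_of_real (\<tau> i))" for i
    by (simp add: exp_cnj assms mult.commute)
  show ?thesis
    unfolding H_xi_def M0_def Mplus_def Mminus_def cmat_block2 cblock_mat cblock_smat cblock_add
      cblock_sum[OF finite_atLeastAtMost] cblock_diff char_mat_def adj_diff adj_mat adj_sum[OF finite_atLeastAtMost]
      adj_smat adj_cmat e assms
    by (simp add: cmat_mul cmat_diff cmat_add cmat_uminus cmat_scaleR cmat_transpose cmat_zero smat_zero smat_uminus sum_negf mat_uminus
       mult.commute algebra_simps)
qed


lemma mv_scaleR: "(A::'a::real_algebra_1^'n^'m) *v (c *\<^sub>R x) = c *\<^sub>R (A *v x)"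
  by (simp add: matrix_vector_mult_def vec_eq_iff scaleR_sum_right)
lemma scaleR_mv: "(c *\<^sub>R (A::'a::real_algebra_1^'n^'m)) *v x = c *\<^sub>R (A *v x)"
  by (simp add: matrix_vector_mult_def vec_eq_iff scaleR_sum_right)
lemma mv_uminus: "(A::'a::ring_1^'n^'m) *v (- x) = - (A *v x)"
  by (simp add: matrix_vector_mult_def vec_eq_iff sum_negf)
lemma uminus_mv: "(- (A::'a::ring_1^'n^'m)) *v x = - (A *v x)"
  by (simp add: matrix_vector_mult_def vec_eq_iff sum_negf)

lemma Dt_inv:
  fixes D :: "real^'u::finite^'y::finite"
  assumes "invertible (D_xi D \<xi>)" "\<xi> > 0"
  shows "invertible (Dt_xi D \<xi>)"
proof -
  obtain Di where Di: "Di ** D_xi D \<xi> = mat 1" using assms(1) invertible_left_inverse by blast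
  have "\<forall>w. Dt_xi D \<xi> *v w = 0 \<longrightarrow> w = 0"
  proof (intro allI impI)
    fix w assume w: "Dt_xi D \<xi> *v w = 0"
    define q where "q = transpose D *v w"
    have Dq: "D *v q = \<xi>\<^sup>2 *\<^sub>R w" using w
      by (simp add: Dt_xi_def q_def matrix_vector_mult_diff_rdistrib scaleR_mv matrix_vector_mul_assoc del: transpose_matrix_vector)
    have "D_xi D \<xi> *v q = transpose D *v (D *v q) - \<xi>\<^sup>2 *\<^sub>R q"
      by (simp add: D_xi_def matrix_vector_mult_diff_rdistrib scaleR_mv matrix_vector_mul_assoc del: transpose_matrix_vector)
    also have "... = 0" unfolding Dq by (simp add: mv_scaleR q_def del: transpose_matrix_vector)
    finally have "q = 0" using Di by (metis matrix_vector_mul_assoc matrix_vector_mul_lid matrix_vector_mult_0_right)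
    then show "w = 0" using Dq assms(2) by simp
  qed
  then show ?thesis using matrix_left_invertible_ker invertible_left_inverse by blast
qed

lemmas mvs = mv_scaleR scaleR_mv mv_uminus uminus_mv matrix_vector_right_distrib matrix_vector_mult_diff_distrib
  matrix_vector_mult_add_rdistrib matrix_vector_mult_diff_rdistrib matrix_vector_mul_assoc[symmetric]

lemma DT_id:
  fixes d :: "complex^'u^'y" and dt :: "complex^'y^'u" and di :: "complex^'u^'u" and dti :: "complex^'y^'y"
  assumes h1: "\<And>w. di *v (dt *v (d *v w)) - k *\<^sub>R (di *v w) = w"
    and h3: "\<And>w. d *v (dt *v (dti *v w)) - k *\<^sub>R (dti *v w) = w"
  shows "d *v (di *v (dt *v w)) - w = k *\<^sub>R (dti *v w)"
proof -
  define u where "u = dti *v w"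
  define q where "q = dt *v u"
  have w: "w = d *v q - k *\<^sub>R u" using h3[of w] by (simp add: u_def q_def)
  have e: "di *v (dt *v (d *v q)) = q + k *\<^sub>R (di *v q)" using h1[of q] by (simp add: algebra_simps)
  have "d *v (di *v (dt *v w)) = d *v (di *v (dt *v (d *v q))) - k *\<^sub>R (d *v (di *v q))"
    unfolding w q_def by (simp add: mvs del: matrix_vector_mul_assoc)
  also have "... = d *v q" unfolding e by (simp add: mvs del: matrix_vector_mul_assoc)
  finally have "d *v (di *v (dt *v w)) = d *v q" .
  then show ?thesis by (subst (2) w) (simp add: u_def)
qed

lemma aux3: "(a::'a::ab_group_add) + b + c = 0 \<Longrightarrow> a = - b - c"
  by (metis add.assoc add_diff_cancel_right' diff_0 diff_diff_eq)

lemma abstract_equiv: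
  fixes K Kh Ki Khi :: "complex^'n^'n" and b :: "complex^'u^'n" and bt :: "complex^'n^'u"
    and c :: "complex^'n^'y" and ct :: "complex^'y^'n" and d :: "complex^'u^'y" and dt :: "complex^'y^'u"
    and di :: "complex^'u^'u" and dti :: "complex^'y^'y"
  assumes KKi: "\<And>w. K *v (Ki *v w) = w" and KiK: "\<And>w. Ki *v (K *v w) = w"
    and KhKhi: "\<And>w. Kh *v (Khi *v w) = w" and KhiKh: "\<And>w. Khi *v (Kh *v w) = w"
    and h1: "\<And>w. di *v (dt *v (d *v w)) - k *\<^sub>R (di *v w) = w"
    and h2: "\<And>w. dt *v (d *v (di *v w)) - k *\<^sub>R (di *v w) = w"
    and DT: "\<And>w. d *v (di *v (dt *v w)) - w = k *\<^sub>R (dti *v w)"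
  shows "(\<exists>v. v \<noteq> 0 \<and> (bt ** Khi ** ct + dt) *v ((c ** Ki ** b + d) *v v) = k *\<^sub>R v)
    \<longleftrightarrow> (\<exists>x p. (x \<noteq> 0 \<or> p \<noteq> 0) \<and> K *v x + b *v (di *v (dt *v (c *v x))) + b *v (di *v (bt *v p)) = 0
          \<and> - (Kh *v p) - k *\<^sub>R (ct *v (dti *v (c *v x))) - ct *v (d *v (di *v (bt *v p))) = 0)"
proof
  assume "\<exists>v. v \<noteq> 0 \<and> (bt ** Khi ** ct + dt) *v ((c ** Ki ** b + d) *v v) = k *\<^sub>R v"
  then obtain v where v0: "v \<noteq> 0" and ev: "(bt ** Khi ** ct + dt) *v ((c ** Ki ** b + d) *v v) = k *\<^sub>R v"
    by blast
  define x where "x = Ki *v (b *v v)"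
  define y where "y = c *v x + d *v v"
  define p where "p = Khi *v (ct *v y)"
  have Gv: "(c ** Ki ** b + d) *v v = y" by (simp add: y_def x_def mvs)
  have ev2: "bt *v p + dt *v y = k *\<^sub>R v" using ev unfolding Gv by (simp add: p_def mvs)
  have vv: "v = - (di *v (dt *v (c *v x) + bt *v p))"
  proof -
    have "v = di *v (dt *v (d *v v)) - k *\<^sub>R (di *v v)" using h1[of v] by simp
    also have "... = di *v (dt *v (d *v v) - k *\<^sub>R v)" by (simp add: mvs)
    also have "dt *v (d *v v) - k *\<^sub>R v = - (dt *v (c *v x) + bt *v p)"
      using ev2 by (simp add: y_def algebra_simps)
    finally show ?thesis by (simp add: mvs)
  qed
  have Kx: "K *v x = b *v v" by (simp add: x_def KKi)
  have Khp: "Kh *v p = ct *v y" by (simp add: p_def KhKhi)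
  show "\<exists>x p. (x \<noteq> 0 \<or> p \<noteq> 0) \<and> K *v x + b *v (di *v (dt *v (c *v x))) + b *v (di *v (bt *v p)) = 0
          \<and> - (Kh *v p) - k *\<^sub>R (ct *v (dti *v (c *v x))) - ct *v (d *v (di *v (bt *v p))) = 0"
  proof (intro exI conjI)
    show "x \<noteq> 0 \<or> p \<noteq> 0" using v0 vv by auto
    show "K *v x + b *v (di *v (dt *v (c *v x))) + b *v (di *v (bt *v p)) = 0"
      unfolding Kx by (subst (1) vv) (simp add: mvs)
    have "k *\<^sub>R (ct *v (dti *v (c *v x))) = ct *v (d *v (di *v (dt *v (c *v x)))) - ct *v (c *v x)"
      using DT[of "c *v x"] by (metis mv_scaleR matrix_vector_mult_diff_distrib)
    then show "- (Kh *v p) - k *\<^sub>R (ct *v (dti *v (c *v x))) - ct *v (d *v (di *v (bt *v p))) = 0"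
      unfolding Khp y_def by (subst vv) (simp add: mvs)
  qed
next
  assume "\<exists>x p. (x \<noteq> 0 \<or> p \<noteq> 0) \<and> K *v x + b *v (di *v (dt *v (c *v x))) + b *v (di *v (bt *v p)) = 0
          \<and> - (Kh *v p) - k *\<^sub>R (ct *v (dti *v (c *v x))) - ct *v (d *v (di *v (bt *v p))) = 0"
  then obtain x p where nz: "x \<noteq> 0 \<or> p \<noteq> 0"
    and r1: "K *v x + b *v (di *v (dt *v (c *v x))) + b *v (di *v (bt *v p)) = 0"
    and r2: "- (Kh *v p) - k *\<^sub>R (ct *v (dti *v (c *v x))) - ct *v (d *v (di *v (bt *v p))) = 0"
    by blast
  define v where "v = - (di *v (dt *v (c *v x) + bt *v p))"
  define y where "y = c *v x + d *v v"
  have Kx: "K *v x = b *v v" using aux3[OF r1] by (simp add: v_def mvs)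
  have DTc: "k *\<^sub>R (ct *v (dti *v (c *v x))) = ct *v (d *v (di *v (dt *v (c *v x)))) - ct *v (c *v x)"
      using DT[of "c *v x"] by (metis mv_scaleR matrix_vector_mult_diff_distrib)
  have Khp: "Kh *v p = ct *v y" using r2 unfolding DTc by (simp add: y_def v_def mvs algebra_simps)
  have x: "x = Ki *v (b *v v)" using KiK[of x] Kx by simp
  have p: "p = Khi *v (ct *v y)" using KhiKh[of p] Khp by simp
  have v0: "v \<noteq> 0"
  proof
    assume "v = 0"
    then have "x = 0" using x by simp
    moreover have "p = 0" using p \<open>v = 0\<close> \<open>x = 0\<close> by (simp add: y_def)
    ultimately show False using nz by simp
  qed
  have Gv: "(c ** Ki ** b + d) *v v = y" by (simp add: y_def x mvs)
  have h2': "dt *v (d *v v) - k *\<^sub>R v = - (dt *v (c *v x) + bt *v p)"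
    using h2[of "- (dt *v (c *v x) + bt *v p)"] by (simp add: v_def mvs)
  have "(bt ** Khi ** ct + dt) *v ((c ** Ki ** b + d) *v v) = bt *v p + dt *v y"
    unfolding Gv by (simp add: p mvs)
  also have "... = k *\<^sub>R v" using h2' by (simp add: y_def algebra_simps)
  finally show "\<exists>v. v \<noteq> 0 \<and> (bt ** Khi ** ct + dt) *v ((c ** Ki ** b + d) *v v) = k *\<^sub>R v"
    using v0 by blast
qed


lemma det0_iff: "det (M::'a::field^'n::finite^'n) = 0 \<longleftrightarrow> (\<exists>z. z \<noteq> 0 \<and> M *v z = 0)"
proof -
  have "det M \<noteq> 0 \<longleftrightarrow> (\<forall>z. M *v z = 0 \<longrightarrow> z = 0)"
    using invertible_det_nz[of M] invertible_left_inverse[of M] matrix_left_invertible_ker[where A=M] by simp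
  then show ?thesis by auto
qed

lemma conj_triv: "P \<Longrightarrow> (P \<and> Q) = Q" by simp

lemma vl_vj: "vl (vj x p) = x" by (simp add: vl_def vj_def vec_eq_iff)
lemma vr_vj: "vr (vj x p) = p" by (simp add: vr_def vj_def vec_eq_iff)

lemma inv_vec: assumes "X ** Y = mat 1" shows "X *v (Y *v w) = w"
  by (simp add: matrix_vector_mul_assoc assms)

theorem theorem4:
  fixes m :: nat
    and A :: "nat \<Rightarrow> real^'n::finite^'n"
    and \<tau> :: "nat \<Rightarrow> real"
    and B :: "real^'u::finite^'n"
    and C :: "real^'n^'y::finite"
    and D :: "real^'u^'y"
    and \<xi> \<omega> :: real
  assumes "m \<ge> 1"
    and "\<forall>i\<in>{1..m}. \<tau> i \<ge> 0"
    and stable: "\<forall>s. det (char_mat m A \<tau> s) = 0 \<longrightarrow> Re s < 0"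
    and "\<xi> > 0"
    and "invertible (D_xi D \<xi>)"
    and "\<omega> \<ge> 0"
  shows "is_singular_value (transfer m A \<tau> B C D (\<i> * complex_of_real \<omega>)) \<xi>
     \<longleftrightarrow> det (H_xi m A \<tau> B C D \<xi> (\<i> * complex_of_real \<omega>)) = 0"
proof -
  define s where "s = \<i> * complex_of_real \<omega>"
  have cs: "cnj s = - s" by (simp add: s_def)
  define K where "K = char_mat m A \<tau> s"
  have "det K \<noteq> 0" using stable unfolding K_def s_def by force
  then have invK: "invertible K" by (simp add: invertible_det_nz)
  define Ki where "Ki = matrix_inv K"
  note KK = minv[OF invK, folded Ki_def]
  define Kh where "Kh = adjoint_mat K"
  define Khi where "Khi = adjoint_mat Ki"
  have KhKhi: "Kh ** Khi = mat 1" unfolding Kh_def Khi_def by (metis adj_mul adj_mat1 KK(2))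
  have KhiKh: "Khi ** Kh = mat 1" unfolding Kh_def Khi_def by (metis adj_mul adj_mat1 KK(1))
  define Di where "Di = matrix_inv (D_xi D \<xi>)"
  note DD = minv[OF assms(5), folded Di_def]
  define Dti where "Dti = matrix_inv (Dt_xi D \<xi>)"
  note DDt = minv[OF Dt_inv[OF assms(5) assms(4)], folded Dti_def]
  define b where "b = cmat B"
  define c where "c = cmat C"
  define d where "d = cmat D"
  define di where "di = cmat Di"
  define dti where "dti = cmat Dti"
  define k where "k = \<xi>\<^sup>2"
  have h1: "di *v (transpose d *v (d *v w)) - k *\<^sub>R (di *v w) = w" for w
  proof -
    have "cmat (Di ** D_xi D \<xi>) *v w = w" using DD by (simp add: cmat_mat1)
    then show ?thesis unfolding D_xi_def cmat_mul cmat_diff cmat_scaleR cmat_mat1 cmat_transpose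
      by (simp add: mvs di_def d_def k_def del: transpose_matrix_vector)
  qed
  have h2: "transpose d *v (d *v (di *v w)) - k *\<^sub>R (di *v w) = w" for w
  proof -
    have "cmat (D_xi D \<xi> ** Di) *v w = w" using DD by (simp add: cmat_mat1)
    then show ?thesis unfolding D_xi_def cmat_mul cmat_diff cmat_scaleR cmat_mat1 cmat_transpose
      by (simp add: mvs di_def d_def k_def del: transpose_matrix_vector)
  qed
  have h3: "d *v (transpose d *v (dti *v w)) - k *\<^sub>R (dti *v w) = w" for w
  proof -
    have "cmat (Dt_xi D \<xi> ** Dti) *v w = w" using DDt by (simp add: cmat_mat1)
    then show ?thesis unfolding Dt_xi_def cmat_mul cmat_diff cmat_scaleR cmat_mat1 cmat_transpose
      by (simp add: mvs dti_def d_def k_def del: transpose_matrix_vector)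
  qed
  have DT: "d *v (di *v (transpose d *v w)) - w = k *\<^sub>R (dti *v w)" for w
    by (rule DT_id[OF h1 h3])
  note AE = abstract_equiv[where K=K and Ki=Ki and Kh=Kh and Khi=Khi and di=di and dt="transpose d" and d=d and k=k
     and dti=dti and bt="transpose b" and c=c and b=b and ct="transpose c",
     OF inv_vec[OF KK(1)] inv_vec[OF KK(2)] inv_vec[OF KhKhi] inv_vec[OF KhiKh] h1 h2 DT]
  have G: "transfer m A \<tau> B C D s = c ** Ki ** b + d"
    by (simp add: transfer_def K_def Ki_def b_def c_def d_def)
  have Gh: "adjoint_mat (c ** Ki ** b + d) = transpose b ** Khi ** transpose c + transpose d"
    by (simp add: adj_add adj_mul adj_cmat b_def c_def d_def Khi_def matrix_mul_assoc)
  have lhs: "is_singular_value (transfer m A \<tau> B C D s) \<xi> \<longleftrightarrow>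
     (\<exists>v. v \<noteq> 0 \<and> (transpose b ** Khi ** transpose c + transpose d) *v ((c ** Ki ** b + d) *v v) = k *\<^sub>R v)"
  proof -
    have e: "complex_of_real (\<xi>\<^sup>2) *s v = \<xi>\<^sup>2 *\<^sub>R v" for v :: "complex^'u"
      by (simp add: vec_eq_iff complex_eq_iff)
    show ?thesis unfolding is_singular_value_def is_eigenvalue_def G Gh matrix_vector_mul_assoc[symmetric] e k_def
      using less_imp_le[OF assms(4)] by (rule conj_triv)
  qed
  have Hb: "H_xi m A \<tau> B C D \<xi> s = cblock (K + b ** di ** transpose d ** c) (b ** di ** transpose b)
     (- (k *\<^sub>R (transpose c ** dti ** c))) (- Kh - transpose c ** d ** di ** transpose b)"
    unfolding H_block[OF cs] by (simp add: K_def Kh_def b_def c_def d_def di_def dti_def Di_def Dti_def k_def)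
  have rhs: "det (H_xi m A \<tau> B C D \<xi> s) = 0 \<longleftrightarrow> (\<exists>z. z \<noteq> 0 \<and> H_xi m A \<tau> B C D \<xi> s *v z = 0)"
    by (rule det0_iff)
  have r1: "(K + b ** di ** transpose d ** c) *v x + (b ** di ** transpose b) *v p =
      K *v x + b *v (di *v (transpose d *v (c *v x))) + b *v (di *v (transpose b *v p))" for x p
    by (simp add: mvs del: transpose_matrix_vector)
  have r2: "(- (k *\<^sub>R (transpose c ** dti ** c))) *v x + (- Kh - transpose c ** d ** di ** transpose b) *v p =
      - (Kh *v p) - k *\<^sub>R (transpose c *v (dti *v (c *v x))) - transpose c *v (d *v (di *v (transpose b *v p)))" for x p
    by (simp add: mvs algebra_simps del: transpose_matrix_vector)
  have ex: "(\<exists>z. z \<noteq> 0 \<and> H_xi m A \<tau> B C D \<xi> s *v z = 0) \<longleftrightarrow>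
     (\<exists>x p. (x \<noteq> 0 \<or> p \<noteq> 0) \<and> K *v x + b *v (di *v (transpose d *v (c *v x))) + b *v (di *v (transpose b *v p)) = 0
          \<and> - (Kh *v p) - k *\<^sub>R (transpose c *v (dti *v (c *v x))) - transpose c *v (d *v (di *v (transpose b *v p))) = 0)"
  proof
    assume "\<exists>z. z \<noteq> 0 \<and> H_xi m A \<tau> B C D \<xi> s *v z = 0"
    then obtain z where z: "z \<noteq> 0" "H_xi m A \<tau> B C D \<xi> s *v z = 0" by blast
    have nz: "vl z \<noteq> 0 \<or> vr z \<noteq> 0" using z(1) vlr[of z] by (auto simp: vj_eq0)
    have eqs: "K *v vl z + b *v (di *v (transpose d *v (c *v vl z))) + b *v (di *v (transpose b *v vr z)) = 0
          \<and> - (Kh *v vr z) - k *\<^sub>R (transpose c *v (dti *v (c *v vl z))) - transpose c *v (d *v (di *v (transpose b *v vr z))) = 0"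
      using z(2) unfolding Hb cblock_mv vj_eq0 r1 r2 .
    show "\<exists>x p. (x \<noteq> 0 \<or> p \<noteq> 0) \<and> K *v x + b *v (di *v (transpose d *v (c *v x))) + b *v (di *v (transpose b *v p)) = 0
          \<and> - (Kh *v p) - k *\<^sub>R (transpose c *v (dti *v (c *v x))) - transpose c *v (d *v (di *v (transpose b *v p))) = 0"
      by (rule exI[of _ "vl z"], rule exI[of _ "vr z"]) (use nz eqs in simp)
  next
    assume "\<exists>x p. (x \<noteq> 0 \<or> p \<noteq> 0) \<and> K *v x + b *v (di *v (transpose d *v (c *v x))) + b *v (di *v (transpose b *v p)) = 0
          \<and> - (Kh *v p) - k *\<^sub>R (transpose c *v (dti *v (c *v x))) - transpose c *v (d *v (di *v (transpose b *v p))) = 0"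
    then obtain x p where xp: "x \<noteq> 0 \<or> p \<noteq> 0" "K *v x + b *v (di *v (transpose d *v (c *v x))) + b *v (di *v (transpose b *v p)) = 0"
          "- (Kh *v p) - k *\<^sub>R (transpose c *v (dti *v (c *v x))) - transpose c *v (d *v (di *v (transpose b *v p))) = 0"
      by blast
    have "vj x p \<noteq> 0" using xp(1) by (simp add: vj_eq0)
    moreover have "H_xi m A \<tau> B C D \<xi> s *v vj x p = 0"
      unfolding Hb cblock_mv vj_eq0 r1 r2 vl_vj vr_vj using xp(2,3) by (rule conjI)
    ultimately show "\<exists>z. z \<noteq> 0 \<and> H_xi m A \<tau> B C D \<xi> s *v z = 0" by (intro exI conjI)
  qed
  show ?thesis unfolding s_def[symmetric] lhs rhs ex by (rule AE)
qed

end
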